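(* Let $q$ be a prime power, $m \ge 2$ an integer, $g = \gcd(q-1, m(m-1))$, and $\lambda$ a partition of $m$ such that $S_{\lambda,\mathbb{F}_q}$ is nonempty. If $\delta_1, \delta_2 \in D_{\lambda,\mathbb{F}_q}$ and $\delta_2/\delta_1$ is a $g$th power in $\mathbb{F}_q^\times$, then the number of polynomials in $S_{\lambda,\mathbb{F}_q}$ with discriminant $\delta_1$ equals the number of polynomials in $S_{\lambda,\mathbb{F}_q}$ with discriminant $\delta_2$.
   Context: For a partition $\lambda = (\lambda_1,\dots,\lambda_k)$ of $m$ (positive integers summing to $m$), a monic $f \in \mathbb{F}_q[x]$ of degree $m$ has factorization type $\lambda$ if $f = \pi_1\cdots\pi_k$ with the $\pi_i$ distinct monic irreducible polynomials and $\deg \pi_i = \lambda_i$. $S_{\lambda,\mathbb{F}_q}$ is the set of monic squarefree polynomials in $\mathbb{F}_q[x]$ of factorization type $\lambda$, and $D_{\lambda,\mathbb{F}_q} = \{\operatorname{disc}(f) : f \in S_{\lambda,\mathbb{F}_q}\}$. For $f$ of degree $m\ge 2$ with leading coefficient $a_m$ and roots $\alpha_i$ in a splitting field, $\operatorname{disc}(f) = a_m^{2m-2}\prod_{i<j}(\alpha_i-\alpha_j)^2$. *)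

theory Defs
  imports "HOL-Computational_Algebra.Computational_Algebra" "Subresultants.Resultant_Prelim"
begin

text \<open>This equals lc(f)^(2m-2) * prod_{i<j} (alpha_i - alpha_j)^2.\<close>
definition disc :: "'a :: field poly \<Rightarrow> 'a" where
  "disc f = (let m = degree f in
     (-1) ^ (m * (m - 1) div 2) * resultant_sub m (m - 1) f (pderiv f) / lead_coeff f)"

definition has_fact_type :: "'a :: field poly \<Rightarrow> nat multiset \<Rightarrow> bool" where
  "has_fact_type f lam \<longleftrightarrow>
     (\<exists>P. finite P \<and> (\<forall>p\<in>P. monic p \<and> irreducible p) \<and> f = \<Prod>P \<and>
          image_mset degree (mset_set P) = lam)"

definition S_lam :: "nat multiset \<Rightarrow> 'a :: field poly set" where
  "S_lam lam = {f. monic f \<and> squarefree f \<and> has_fact_type f lam}"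

definition D_lam :: "nat multiset \<Rightarrow> 'a :: field set" where
  "D_lam lam = disc ` S_lam lam"

end

theory Submission
  imports Defs
begin


lemma det_diag_mat:
  "det (mat N N (\<lambda>(i,j). if i = j then f i else 0) :: 'a::comm_ring_1 mat) = (\<Prod>i<N. f i)"
proof -
  have "det (mat N N (\<lambda>(i,j). if i = j then f i else 0) :: 'a mat) =
        prod_list (diag_mat (mat N N (\<lambda>(i,j). if i = j then f i else 0) :: 'a mat))"
    by (rule det_upper_triangular[of _ N]) (auto simp: upper_triangular_def)
  also have "\<dots> = (\<Prod>i<N. f i)"
    by (simp add: diag_mat_def prod.list_conv_set_nth atLeast0LessThan[symmetric] )
  finally show ?thesis .
qed


lemma resultant_sub_scale:
  fixes p q p' q' :: "'a::field poly"
  assumes a: "a \<noteq> 0"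
  and cp: "\<And>k. coeff p' k = c * a^k * coeff p k"
  and cq: "\<And>k. coeff q' k = d * a^k * coeff q k"
  shows "resultant_sub m n p' q' = c^n * d^m * a^(m*n) * resultant_sub m n p q"
proof -
  define N where "N = m + n"
  define M where "M = sylvester_mat_sub m n p q"
  define M' where "M' = sylvester_mat_sub m n p' q'"
  define r where "r i = (if i < n then c * a^(m+i) else d * a^i)" for i
  define B :: "'a mat" where "B = mat N N (\<lambda>(i,j). if i = j then a^i else 0)"
  define R :: "'a mat" where "R = mat N N (\<lambda>(i,j). if i = j then r i else 0)"
  have MC: "M \<in> carrier_mat N N" "M' \<in> carrier_mat N N" unfolding M_def M'_def N_def by auto
  have BC: "B \<in> carrier_mat N N" "R \<in> carrier_mat N N" unfolding B_def R_def by auto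
  have eq: "M' * B = R * M"
  proof (rule eq_matI)
    fix i j assume ij: "i < dim_row (R * M)" "j < dim_col (R * M)"
    hence i: "i < N" and j: "j < N" using MC BC by auto
    have "(M' * B) $$ (i,j) = (\<Sum>k<N. M' $$ (i,k) * B $$ (k,j))"
      using MC BC i j by (simp add: index_mult_mat scalar_prod_def atLeast0LessThan)
    also have "\<dots> = M' $$ (i,j) * a^j"
      using j by (simp add: B_def if_distrib cong: if_cong)
    finally have l: "(M' * B) $$ (i,j) = M' $$ (i,j) * a^j" .
    have "(R * M) $$ (i,j) = (\<Sum>k<N. R $$ (i,k) * M $$ (k,j))"
      using MC BC i j by (simp add: index_mult_mat scalar_prod_def atLeast0LessThan)
    also have "\<dots> = r i * M $$ (i,j)"
      using i by (simp add: R_def if_distrib[of "\<lambda>x. x * _"] cong: if_cong)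
    finally have rr: "(R * M) $$ (i,j) = r i * M $$ (i,j)" .
    have ij': "i < m + n" "j < m + n" using i j N_def by auto
    have "M' $$ (i,j) * a^j = r i * M $$ (i,j)"
    proof (cases "i < n")
      case True
      show ?thesis
      proof (cases "i \<le> j \<and> j - i \<le> m")
        case True
        hence "m + i - j + j = m + i" by linarith
        hence "a ^ (m + i - j) * a ^ j = a ^ (m + i)" by (metis power_add)
        thus ?thesis using \<open>i < n\<close> True by (simp add: M_def M'_def sylvester_mat_sub_index[OF ij'] r_def cp mult_ac)
      qed (use True in \<open>auto simp add: M_def M'_def sylvester_mat_sub_index[OF ij'] r_def\<close>)
    next
      case False
      show ?thesis
      proof (cases "i - n \<le> j \<and> j \<le> i")
        case True
        hence "i - j + j = i" by linarith
        hence "a ^ (i - j) * a ^ j = a ^ i" by (metis power_add)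
        thus ?thesis using False True by (simp add: M_def M'_def sylvester_mat_sub_index[OF ij'] r_def cq mult_ac)
      qed (use False in \<open>auto simp add: M_def M'_def sylvester_mat_sub_index[OF ij'] r_def\<close>)
    qed
    thus "(M' * B) $$ (i,j) = (R * M) $$ (i,j)" using l rr by simp
  qed (use MC BC in auto)
  have "det M' * det B = det R * det M"
    using arg_cong[OF eq, of det] det_mult MC BC by metis
  moreover have "det B = a ^ (\<Sum>i<N. i)" unfolding B_def det_diag_mat by (simp add: power_sum)
  moreover have "det R = c^n * d^m * a^(m*n) * a ^ (\<Sum>i<N. i)"
  proof -
    have "det R = (\<Prod>i<N. r i)" unfolding R_def det_diag_mat ..
    also have "\<dots> = (\<Prod>i\<in>{0..<n}. r i) * (\<Prod>i\<in>{n..<N}. r i)"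
      unfolding N_def by (simp add: atLeast0LessThan[symmetric] prod.atLeastLessThan_concat)
    also have "(\<Prod>i\<in>{0..<n}. r i) = (\<Prod>i\<in>{0..<n}. c * a^(m+i))"
      by (rule prod.cong) (auto simp: r_def)
    also have "\<dots> = c^n * a^(\<Sum>i\<in>{0..<n}. m + i)"
      by (simp add: prod.distrib power_sum)
    also have "(\<Prod>i\<in>{n..<N}. r i) = (\<Prod>i\<in>{n..<N}. d * a^i)"
      by (rule prod.cong) (auto simp: r_def)
    also have "\<dots> = d^m * a^(\<Sum>i\<in>{n..<N}. i)"
      by (simp add: prod.distrib power_sum N_def)
    also have "(\<Sum>i\<in>{0..<n}. m + i) + (\<Sum>i\<in>{n..<N}. i) = m * n + (\<Sum>i<N. i)"
      using sum.atLeastLessThan_concat[of 0 n "m+n" "\<lambda>i. i"] by (simp add: sum.distrib N_def atLeast0LessThan[symmetric])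
    hence "c ^ n * a ^ (\<Sum>i = 0..<n. m + i) * (d ^ m * a ^ sum (\<lambda>i. i) {n..<N}) =
      c ^ n * d ^ m * a ^ (m * n) * a ^ (\<Sum>i<N. i)"
      by (metis (no_types) power_add mult_ac)
    finally show ?thesis .
  qed
  ultimately have "det M' * a ^ (\<Sum>i<N. i) = (c^n * d^m * a^(m*n) * det M) * a ^ (\<Sum>i<N. i)"
    by (simp add: mult_ac)
  hence "det M' = c^n * d^m * a^(m*n) * det M" using a by simp
  thus ?thesis unfolding resultant_sub_def M_def M'_def .
qed


definition nm :: "'a::field \<Rightarrow> 'a poly \<Rightarrow> 'a poly" where
  "nm a f = Polynomial.smult (inverse (a ^ degree f)) (f \<circ>\<^sub>p [:0, a:])"

lemma coeff_pcomp_scale: "coeff ((f::'a::comm_ring_1 poly) \<circ>\<^sub>p [:0, a:]) k = a^k * coeff f k"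
proof (induction f arbitrary: k)
  case (pCons c p)
  show ?case by (cases k) (auto simp: pcompose_pCons coeff_pCons pCons.IH)
qed simp

lemma degree_nm: "(a::'a::field) \<noteq> 0 \<Longrightarrow> degree (nm a f) = degree f"
  by (simp add: nm_def degree_pcompose)

lemma coeff_nm: "coeff (nm a f) k = a^k / a^(degree f) * coeff f k"
  by (simp add: nm_def coeff_pcomp_scale field_simps)

lemma nm_inv: assumes "(a::'a::field) \<noteq> 0" shows "nm (inverse a) (nm a f) = f"
proof (rule poly_eqI)
  fix k
  show "coeff (nm (inverse a) (nm a f)) k = coeff f k"
    using assms by (simp add: coeff_nm degree_nm power_inverse field_simps)
qed


lemma nm_mult: assumes "(a::'a::field) \<noteq> 0" shows "nm a (p * q) = nm a p * nm a q"
proof (cases "p = 0 \<or> q = 0")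
  case True thus ?thesis by (auto simp: nm_def)
next
  case False
  hence "degree (p * q) = degree p + degree q" by (simp add: degree_mult_eq)
  thus ?thesis by (simp add: nm_def pcompose_mult power_add mult_ac)
qed

lemma nm_1: "nm a 1 = 1" by (simp add: nm_def pcompose_1)
lemma nm_0: "nm a 0 = 0" by (simp add: nm_def)

lemma lead_coeff_nm: "(a::'a::field) \<noteq> 0 \<Longrightarrow> lead_coeff (nm a f) = lead_coeff f"
  by (simp add: degree_nm coeff_nm)

lemma nm_prod: assumes "(a::'a::field) \<noteq> 0" shows "nm a (\<Prod>P) = (\<Prod>p\<in>P. nm a p)"
proof (cases "finite P")
  case True thus ?thesis by (induction P rule: finite_induct) (simp_all add: nm_1 nm_mult assms)
qed (simp add: nm_1)

lemma nm_inj: "(a::'a::field) \<noteq> 0 \<Longrightarrow> inj (nm a)"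
  by (metis injI nm_inv)



lemma nm_unit: assumes "(a::'a::field) \<noteq> 0" "is_unit x" shows "is_unit (nm a x)"
proof -
  obtain y where "1 = x * y" using assms(2) by (rule dvdE)
  hence "nm a 1 = nm a (x * y)" by simp
  hence "1 = nm a x * nm a y" by (simp only: nm_1 nm_mult[OF assms(1)])
  thus ?thesis by (rule dvdI)
qed

lemma nm_unit_iff: assumes "(a::'a::field) \<noteq> 0" shows "is_unit (nm a x) \<longleftrightarrow> is_unit x"
proof
  assume "is_unit (nm a x)"
  hence "is_unit (nm (inverse a) (nm a x))" by (rule nm_unit[rotated]) (simp add: assms)
  thus "is_unit x" by (metis nm_inv[OF assms])
next
  assume "is_unit x" thus "is_unit (nm a x)" by (rule nm_unit[OF assms])
qed

lemma nm_irreducible: assumes a: "(a::'a::field) \<noteq> 0" and irr: "irreducible x" shows "irreducible (nm a x)"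
proof -
  have ia: "inverse a \<noteq> 0" using a by simp
  have x0: "x \<noteq> 0" using irr unfolding irreducible_def by blast
  have "nm a x \<noteq> 0"
  proof
    assume "nm a x = 0"
    hence "nm (inverse a) (nm a x) = 0" by (simp add: nm_0)
    thus False using x0 by (simp only: nm_inv[OF a])
  qed
  moreover have "\<not> is_unit x" using irr unfolding irreducible_def by blast
  hence "\<not> is_unit (nm a x)" by (simp only: nm_unit_iff[OF a] not_False_eq_True)
  moreover have "is_unit u \<or> is_unit v" if uv: "nm a x = u * v" for u v
  proof -
    have "x = nm (inverse a) (nm a x)" by (simp only: nm_inv[OF a])
    also have "\<dots> = nm (inverse a) u * nm (inverse a) v" by (simp only: uv nm_mult[OF ia])
    finally have "is_unit (nm (inverse a) u) \<or> is_unit (nm (inverse a) v)"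
      using irr unfolding irreducible_def by blast
    thus ?thesis by (simp only: nm_unit_iff[OF ia])
  qed
  ultimately show ?thesis unfolding irreducible_def by blast
qed

lemma nm_squarefree: assumes a: "(a::'a::field) \<noteq> 0" and sq: "squarefree x" shows "squarefree (nm a x)"
proof (rule squarefreeI)
  have ia: "inverse a \<noteq> 0" using a by simp
  fix y assume "y^2 dvd nm a x"
  then obtain z where z: "nm a x = y^2 * z" by (rule dvdE)
  have "x = nm (inverse a) (nm a x)" by (simp only: nm_inv[OF a])
  also have "\<dots> = nm (inverse a) y ^ 2 * nm (inverse a) z"
    by (simp only: z power2_eq_square nm_mult[OF ia])
  finally have "nm (inverse a) y ^ 2 dvd x" by (metis dvd_triv_left)
  hence "is_unit (nm (inverse a) y)" using sq squarefreeD by blast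
  thus "is_unit y" by (simp only: nm_unit_iff[OF ia])
qed

lemma fermat_field: fixes x :: "'a::{field,finite}" assumes "x \<noteq> 0"
  shows "x ^ (card (UNIV::'a set) - 1) = 1"
proof -
  define U where "U = (UNIV - {0::'a})"
  have cU: "card U = card (UNIV::'a set) - 1" unfolding U_def by (simp add: card_Diff_subset)
  have inj: "inj_on ((*) x) U" using assms by (auto simp: inj_on_def)
  have im: "(*) x ` U = U"
  proof
    show "(*) x ` U \<subseteq> U" using assms by (auto simp: U_def)
    show "U \<subseteq> (*) x ` U"
    proof
      fix y assume "y \<in> U"
      hence "inverse x * y \<in> U" "y = x * (inverse x * y)" using assms by (auto simp: U_def)
      thus "y \<in> (*) x ` U" by blast
    qed
  qed
  have "prod id U = prod id ((*) x ` U)" using im by simp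
  also have "\<dots> = prod (\<lambda>y. x * y) U" using prod.reindex[OF inj, of id] by simp
  also have "\<dots> = x ^ card U * prod id U" by (simp add: prod.distrib)
  finally have "x ^ card U * prod id U = 1 * prod id U" by simp
  moreover have "prod id U \<noteq> 0" unfolding U_def by (simp add: prod_zero_iff)
  ultimately show ?thesis using cU by simp
qed


lemma fac_lemma: assumes a: "(a::'a::field) \<noteq> 0"
  shows "(inverse (a^d))^(d-1) * (a*inverse(a^d))^d * a^(d*(d-1)) = inverse (a^(d*(d-1)))"
proof (cases d)
  case (Suc e)
  define b where "b = inverse a"
  have 1: "inverse (a^n) = b^n" for n by (simp add: b_def power_inverse)
  have 3: "a^n * b^n = 1" for n using a by (simp add: b_def power_mult_distrib[symmetric])
  have 2: "a * b^d = b^e" using 3[of 1] Suc by (simp add: mult.assoc[symmetric])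
  have "(inverse (a^d))^(d-1) * (a*inverse(a^d))^d * a^(d*(d-1)) = (b^d)^e * (b^e)^d * a^(d*e)"
    unfolding 1 2 using Suc by simp
  also have "\<dots> = b^(d*e) * (a^(d*e) * b^(d*e))" by (simp add: power_mult[symmetric] mult_ac)
  also have "\<dots> = b^(d*e)" by (simp only: 3 mult_1_right)
  also have "\<dots> = inverse (a^(d*(d-1)))" using Suc by (simp add: 1)
  finally show ?thesis .
qed simp

lemma disc_nm: assumes a: "(a::'a::field) \<noteq> 0" and mf: "monic f"
  shows "disc (nm a f) = disc f / a^(degree f * (degree f - 1))"
proof -
  define d where "d = degree f"
  have deg: "degree (nm a f) = d" using a by (simp add: degree_nm d_def)
  have lc: "lead_coeff (nm a f) = 1" using a mf by (simp add: lead_coeff_nm)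
  have cp: "\<And>k. coeff (nm a f) k = inverse (a^d) * a^k * coeff f k"
    by (simp add: coeff_nm d_def field_simps)
  have cq: "\<And>k. coeff (pderiv (nm a f)) k = (a * inverse (a^d)) * a^k * coeff (pderiv f) k"
    by (simp add: coeff_pderiv coeff_nm d_def field_simps)
  have R: "resultant_sub d (d-1) (nm a f) (pderiv (nm a f)) =
    (inverse (a^d))^(d-1) * (a*inverse(a^d))^d * a^(d*(d-1)) * resultant_sub d (d-1) f (pderiv f)"
    by (rule resultant_sub_scale[OF a cp cq])
  have lc': "coeff (nm a f) d = 1" using lc deg by simp
  show ?thesis
    unfolding disc_def Let_def deg lc' R fac_lemma[OF a] using mf
    by (simp add: d_def divide_inverse mult_ac)
qed

lemma deg_S: assumes "f \<in> S_lam lam" shows "degree f = sum_mset lam"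
proof -
  obtain P where P: "finite P" "\<forall>p\<in>P. monic p \<and> irreducible p" "f = \<Prod>P"
     "image_mset degree (mset_set P) = lam"
    using assms unfolding S_lam_def has_fact_type_def by blast
  have "\<forall>p\<in>P. p \<noteq> 0" using P(2) by auto
  hence "degree f = (\<Sum>p\<in>P. degree p)" using P(3) degree_prod_eq_sum_degree[of P "\<lambda>p. p"] by simp
  also have "\<dots> = sum_mset lam" using P(4) by (simp add: sum_unfold_sum_mset)
  finally show ?thesis .
qed

lemma nm_S: assumes a: "(a::'a::field) \<noteq> 0" and f: "f \<in> S_lam lam" shows "nm a f \<in> S_lam lam"
proof -
  obtain P where P: "finite P" "\<forall>p\<in>P. monic p \<and> irreducible p" "f = \<Prod>P"
     "image_mset degree (mset_set P) = lam"
    using f unfolding S_lam_def has_fact_type_def by blast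
  have inj: "inj_on (nm a) P" using nm_inj[OF a] by (auto simp: inj_on_def inj_def)
  have "has_fact_type (nm a f) lam" unfolding has_fact_type_def
  proof (intro exI conjI)
    show "finite (nm a ` P)" using P(1) by simp
    show "\<forall>p\<in>nm a ` P. monic p \<and> irreducible p"
      using P(2) a by (auto simp: lead_coeff_nm nm_irreducible)
    show "nm a f = \<Prod>(nm a ` P)"
      using P(3) a inj by (simp add: nm_prod prod.reindex)
    have "image_mset degree (mset_set (nm a ` P)) = image_mset degree (image_mset (nm a) (mset_set P))"
      using image_mset_mset_set[OF inj] by simp
    also have "\<dots> = image_mset degree (mset_set P)"
      by (simp add: multiset.map_comp o_def degree_nm a)
    finally show "image_mset degree (mset_set (nm a ` P)) = lam" using P(4) by simp
  qed
  thus ?thesis using f a by (auto simp: S_lam_def lead_coeff_nm nm_squarefree)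
qed

theorem lemma4p3:
  fixes lam :: "nat multiset" and m :: nat and \<delta>1 \<delta>2 :: "'a :: {field, finite}"
  assumes "m \<ge> 2"
    and "\<forall>k \<in># lam. k > 0" and "sum_mset lam = m"
    and "(S_lam lam :: 'a poly set) \<noteq> {}"
    and "\<delta>1 \<in> D_lam lam" and "\<delta>2 \<in> D_lam lam"
    and "\<exists>x::'a. x \<noteq> 0 \<and> \<delta>2 / \<delta>1 = x ^ gcd (card (UNIV :: 'a set) - 1) (m * (m - 1))"
  shows "card {f \<in> S_lam lam. disc f = \<delta>1} = card {f \<in> S_lam lam. disc f = \<delta>2}"
proof -
  define N where "N = m * (m - 1)"
  define G where "G = gcd (card (UNIV :: 'a set) - 1) N"
  obtain x :: 'a where x: "x \<noteq> 0" "\<delta>2 / \<delta>1 = x ^ G" using assms(7) unfolding N_def G_def by blast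
  have d1: "\<delta>1 \<noteq> 0"
  proof
    assume "\<delta>1 = 0" hence "x ^ G = 0" using x by simp
    thus False using x by simp
  qed
  have d2: "\<delta>2 = \<delta>1 * x ^ G" using x d1 by (simp add: field_simps)
  have N0: "N \<noteq> 0" unfolding N_def using assms(1) by simp
  obtain s t where st: "N * s = (card (UNIV :: 'a set) - 1) * t + G"
    using bezout_nat[OF N0, of "card (UNIV :: 'a set) - 1"] unfolding G_def by (auto simp: gcd.commute)
  define y where "y = x ^ s"
  have y0: "y \<noteq> 0" using x by (simp add: y_def)
  have yN: "y ^ N = x ^ G"
  proof -
    have "y ^ N = x ^ (N * s)" by (simp add: y_def power_mult[symmetric] mult.commute)
    also have "\<dots> = (x ^ (card (UNIV :: 'a set) - 1)) ^ t * x ^ G"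
      by (simp add: st power_add power_mult)
    also have "\<dots> = x ^ G" using fermat_field[OF x(1)] by simp
    finally show ?thesis .
  qed
  define a where "a = inverse y"
  have a0: "a \<noteq> 0" using y0 by (simp add: a_def)
  have degS: "\<And>f. f \<in> S_lam lam \<Longrightarrow> degree f * (degree f - 1) = N"
    using deg_S assms(3) N_def by metis
  have monS: "\<And>f. f \<in> S_lam lam \<Longrightarrow> monic f" by (simp add: S_lam_def)
  let ?A = "{f \<in> S_lam lam. disc f = \<delta>1}"
  let ?B = "{f \<in> S_lam lam. disc f = \<delta>2}"
  have "bij_betw (nm a) ?A ?B"
  proof (rule bij_betw_byWitness[where f' = "nm y"])
    show "\<forall>f\<in>?A. nm y (nm a f) = f" using nm_inv[OF a0] by (simp add: a_def)
    show "\<forall>f\<in>?B. nm a (nm y f) = f" using nm_inv[OF y0] by (simp add: a_def)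
    show "nm a ` ?A \<subseteq> ?B"
    proof (rule image_subsetI)
      fix f assume "f \<in> ?A" hence f: "f \<in> S_lam lam" "disc f = \<delta>1" by auto
      have "nm a f \<in> S_lam lam" using nm_S[OF a0 f(1)] .
      moreover have "disc (nm a f) = \<delta>2"
        using disc_nm[OF a0 monS[OF f(1)]] degS[OF f(1)] f(2) d2 yN
        by (simp add: a_def power_inverse divide_inverse)
      ultimately show "nm a f \<in> ?B" by simp
    qed
    show "nm y ` ?B \<subseteq> ?A"
    proof (rule image_subsetI)
      fix f assume "f \<in> ?B" hence f: "f \<in> S_lam lam" "disc f = \<delta>2" by auto
      have "nm y f \<in> S_lam lam" using nm_S[OF y0 f(1)] .
      moreover have "disc (nm y f) = \<delta>1"
        using disc_nm[OF y0 monS[OF f(1)]] degS[OF f(1)] f(2) d2 yN y0 x(1)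
        by simp
      ultimately show "nm y f \<in> ?A" by simp
    qed
  qed
  thus ?thesis by (rule bij_betw_same_card)
qed


end
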